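(* Let $X$ be a real vector space, $n\ge 2$, and let $(\cdot,\cdot\mid\cdot,\ldots,\cdot)$ be a weak $n$-inner product on $X$, with $\|x\mid x_n,\ldots,x_2\|:=\sqrt{(x,x\mid x_n,\ldots,x_2)}$. Fix $x_2,\ldots,x_n\in X$, let $Y=\mathrm{span}\{x_2,\ldots,x_n\}$ and let $X/Y=\{\hat x: x\in X\}$ with $\hat x=\{u\in X: u-x\in Y\}$. Then the function $\varphi:X/Y\to[0,\infty)$, $\varphi(\hat x):=\|x\mid x_n,\ldots,x_2\|$, is well defined and is a seminorm on $X/Y$. Moreover, if $x_2,\ldots,x_n$ are linearly independent, then $\varphi$ is a norm on $X/Y$.
   Context: A weak $n$-inner product ($n\ge2$) on a real vector space $X$ is a function $(\cdot,\cdot\mid\cdot,\ldots,\cdot):X^{n+1}\to\mathbb{R}$, written $(x,y\mid x_n,\ldots,x_2)$, such that for all $x,x',y,x_2,\ldots,x_n\in X$ and $\alpha\in\mathbb{R}$: (P1) $(x,x\mid x_n,\ldots,x_2)\ge 0$, with equality if and only if $x,x_2,\ldots,x_n$ are linearly dependent; (P2) $(x,x\mid x_n,\ldots,x_2)=(x_n,x_n\mid x,x_{n-1},\ldots,x_2)$; (P3) $(x,y\mid x_n,\ldots,x_2)=(y,x\mid x_n,\ldots,x_2)$; (P4) $(\alpha x,y\mid x_n,\ldots,x_2)=\alpha(x,y\mid x_n,\ldots,x_2)$; (P5) $(x+x',y\mid x_n,\ldots,x_2)=(x,y\mid x_n,\ldots,x_2)+(x',y\mid x_n,\ldots,x_2)$.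 *)

theory Defs
  imports "HOL-Analysis.Analysis"
begin

text \<open>A finite family (list) of vectors is linearly dependent iff some nontrivial
  linear combination vanishes (duplicates in the list count as dependence).\<close>
definition lin_dep_list :: "'a::real_vector list \<Rightarrow> bool" where
  "lin_dep_list xs \<longleftrightarrow>
     (\<exists>c::nat \<Rightarrow> real. (\<Sum>i<length xs. c i *\<^sub>R xs ! i) = 0 \<and> (\<exists>i<length xs. c i \<noteq> 0))"

text \<open>A weak n-inner product: ip x y [x_n, ..., x_2]; the list argument has length n-1.
  Only its values on lists of length n-1 are relevant.\<close>
definition weak_n_inner_product :: "nat \<Rightarrow> ('a::real_vector \<Rightarrow> 'a \<Rightarrow> 'a list \<Rightarrow> real) \<Rightarrow> bool" where
  "weak_n_inner_product n ip \<longleftrightarrow> 2 \<le> n \<and>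
     (\<forall>x zs. length zs = n - 1 \<longrightarrow>
        ip x x zs \<ge> 0 \<and> (ip x x zs = 0 \<longleftrightarrow> lin_dep_list (x # zs))) \<and>
     (\<forall>x z zs. length zs = n - 2 \<longrightarrow> ip x x (z # zs) = ip z z (x # zs)) \<and>
     (\<forall>x y zs. length zs = n - 1 \<longrightarrow> ip x y zs = ip y x zs) \<and>
     (\<forall>a x y zs. length zs = n - 1 \<longrightarrow> ip (a *\<^sub>R x) y zs = a * ip x y zs) \<and>
     (\<forall>x x' y zs. length zs = n - 1 \<longrightarrow> ip (x + x') y zs = ip x y zs + ip x' y zs)"

definition n_norm :: "('a::real_vector \<Rightarrow> 'a \<Rightarrow> 'a list \<Rightarrow> real) \<Rightarrow> 'a \<Rightarrow> 'a list \<Rightarrow> real" where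
  "n_norm ip x zs = sqrt (ip x x zs)"

definition coset :: "'a::real_vector list \<Rightarrow> 'a \<Rightarrow> 'a set" where
  "coset zs x = {u. u - x \<in> span (set zs)}"

definition quot_phi :: "('a::real_vector \<Rightarrow> 'a \<Rightarrow> 'a list \<Rightarrow> real) \<Rightarrow> 'a list \<Rightarrow> 'a set \<Rightarrow> real" where
  "quot_phi ip zs Q = (SOME r. \<exists>x. Q = coset zs x \<and> r = n_norm ip x zs)"

end

theory Submission
  imports Defs
begin

lemma span_list_comb:
  fixes y :: "'a::real_vector"
  assumes "y \<in> span (set zs)"
  shows "\<exists>c. y = (\<Sum>i<length zs. c i *\<^sub>R zs ! i)"
  using assms
proof (induction zs arbitrary: y)
  case Nil
  then show ?case by simp
next
  case (Cons z zs)
  from Cons.prems obtain k where k: "y - k *\<^sub>R z \<in> span (set zs)"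
    by (auto simp: span_insert)
  from Cons.IH[OF k] obtain c where c: "y - k *\<^sub>R z = (\<Sum>i<length zs. c i *\<^sub>R zs ! i)" by blast
  define d where "d = (\<lambda>i. if i = 0 then k else c (i - 1))"
  have "(\<Sum>i<length (z#zs). d i *\<^sub>R (z#zs) ! i) = k *\<^sub>R z + (\<Sum>i<length zs. c i *\<^sub>R zs ! i)"
    by (simp only: length_Cons sum.lessThan_Suc_shift) (simp add: d_def)
  also have "\<dots> = y" using c by (simp add: algebra_simps)
  finally show ?case by metis
qed

lemma span_lin_dep:
  fixes y :: "'a::real_vector"
  assumes "y \<in> span (set zs)"
  shows "lin_dep_list (y # zs)"
proof -
  from span_list_comb[OF assms] obtain c where c: "y = (\<Sum>i<length zs. c i *\<^sub>R zs ! i)" by blast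
  define d where "d = (\<lambda>i. if i = 0 then 1 else - c (i - 1))"
  have "(\<Sum>i<length (y#zs). d i *\<^sub>R (y#zs) ! i) = y - (\<Sum>i<length zs. c i *\<^sub>R zs ! i)"
    by (simp only: length_Cons sum.lessThan_Suc_shift) (simp add: d_def sum_negf)
  also have "\<dots> = 0" using c by simp
  finally show ?thesis unfolding lin_dep_list_def
    by (rule_tac x=d in exI) (auto simp: d_def)
qed

lemma indep_span:
  fixes x :: "'a::real_vector"
  assumes "lin_dep_list (x # zs)" "\<not> lin_dep_list zs"
  shows "x \<in> span (set zs)"
proof -
  from assms(1) obtain c where c: "(\<Sum>i<length (x#zs). c i *\<^sub>R (x#zs) ! i) = 0"
    and nz: "\<exists>i<length (x#zs). c i \<noteq> 0" unfolding lin_dep_list_def by blast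
  have e: "c 0 *\<^sub>R x + (\<Sum>i<length zs. c (Suc i) *\<^sub>R zs ! i) = 0"
    using c by (simp only: length_Cons sum.lessThan_Suc_shift) simp
  show ?thesis
  proof (cases "c 0 = 0")
    case True
    with nz obtain i where "i < Suc (length zs)" "c i \<noteq> 0" by auto
    with True obtain j where "j < length zs" "c (Suc j) \<noteq> 0"
      by (cases i) auto
    moreover have "(\<Sum>i<length zs. c (Suc i) *\<^sub>R zs ! i) = 0" using e True by simp
    ultimately have "lin_dep_list zs" unfolding lin_dep_list_def
      by (rule_tac x="\<lambda>i. c (Suc i)" in exI) auto
    with assms(2) show ?thesis by blast
  next
    case False
    have s: "(\<Sum>i<length zs. c (Suc i) *\<^sub>R zs ! i) \<in> span (set zs)"
      by (intro span_sum span_scale span_base) auto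
    have "x = (- 1 / c 0) *\<^sub>R (\<Sum>i<length zs. c (Suc i) *\<^sub>R zs ! i)"
    proof -
      have "c 0 *\<^sub>R x = - (\<Sum>i<length zs. c (Suc i) *\<^sub>R zs ! i)"
        using e by (simp add: eq_neg_iff_add_eq_0)
      then have "(1 / c 0) *\<^sub>R (c 0 *\<^sub>R x) = (1 / c 0) *\<^sub>R (- (\<Sum>i<length zs. c (Suc i) *\<^sub>R zs ! i))"
        by simp
      then show ?thesis using False by simp
    qed
    with s show ?thesis by (metis span_scale)
  qed
qed

lemma bil_expand:
  fixes B :: "'a::real_vector \<Rightarrow> 'a \<Rightarrow> real"
  assumes sym: "\<And>x y. B x y = B y x" and add: "\<And>x x' y. B (x+x') y = B x y + B x' y"
    and scal: "\<And>a x y. B (a *\<^sub>R x) y = a * B x y"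
  shows "B (x + t *\<^sub>R y) (x + t *\<^sub>R y) = B x x + 2*t*B x y + t^2 * B y y"
proof -
  have "B (x + t *\<^sub>R y) (x + t *\<^sub>R y) = B x (x + t *\<^sub>R y) + t * B y (x + t *\<^sub>R y)"
    by (simp add: add scal)
  also have "B x (x + t *\<^sub>R y) = B x x + t * B x y"
    by (metis sym add scal)
  also have "B y (x + t *\<^sub>R y) = B x y + t * B y y"
    by (metis sym add scal)
  finally show ?thesis by (simp add: algebra_simps power2_eq_square)
qed

lemma cs:
  fixes B :: "'a::real_vector \<Rightarrow> 'a \<Rightarrow> real"
  assumes pos: "\<And>x. B x x \<ge> 0" and sym: "\<And>x y. B x y = B y x"
    and add: "\<And>x x' y. B (x+x') y = B x y + B x' y"
    and scal: "\<And>a x y. B (a *\<^sub>R x) y = a * B x y"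
  shows "(B x y)^2 \<le> B x x * B y y"
proof -
  have q: "\<And>t. 0 \<le> B x x + 2*t*B x y + t^2 * B y y"
    using pos bil_expand[OF sym add scal] by metis
  show ?thesis
  proof (cases "B y y = 0")
    case True
    have "B x y = 0"
    proof (rule ccontr)
      assume h: "B x y \<noteq> 0"
      have "0 \<le> B x x + 2*(-(B x x + 1)/(2*B x y))*B x y" using q[of "-(B x x + 1)/(2*B x y)"] True by simp
      also have "\<dots> = -1" using h by (simp add: field_simps)
      finally show False by simp
    qed
    then show ?thesis using True by simp
  next
    case False
    then have yp: "B y y > 0" using pos[of y] by simp
    have "0 \<le> B x x + 2*(-B x y/B y y)*B x y + (-B x y/B y y)^2 * B y y" by (rule q)
    also have "\<dots> = B x x - (B x y)^2 / B y y" using yp by (simp add: field_simps power2_eq_square)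
    finally show ?thesis using yp by (simp add: field_simps)
  qed
qed

theorem theorem2p3:
  fixes ip :: "'a::real_vector \<Rightarrow> 'a \<Rightarrow> 'a list \<Rightarrow> real"
    and n :: nat and zs :: "'a list"
  assumes "weak_n_inner_product n ip"
    and "length zs = n - 1"
  shows "(\<forall>x u. coset zs x = coset zs u \<longrightarrow> n_norm ip x zs = n_norm ip u zs)
    \<and> (\<forall>x. quot_phi ip zs (coset zs x) = n_norm ip x zs)
    \<and> (\<forall>x. quot_phi ip zs (coset zs x) \<ge> 0)
    \<and> (\<forall>a x. quot_phi ip zs (coset zs (a *\<^sub>R x)) = \<bar>a\<bar> * quot_phi ip zs (coset zs x))
    \<and> (\<forall>x y. quot_phi ip zs (coset zs (x + y))
              \<le> quot_phi ip zs (coset zs x) + quot_phi ip zs (coset zs y))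
    \<and> (\<not> lin_dep_list zs \<longrightarrow>
         (\<forall>x. quot_phi ip zs (coset zs x) = 0 \<longrightarrow> coset zs x = coset zs 0))"
proof -
  define B where "B = (\<lambda>x y. ip x y zs)"
  have pos: "\<And>x. B x x \<ge> 0" and zero: "\<And>x. B x x = 0 \<longleftrightarrow> lin_dep_list (x # zs)"
    and sym: "\<And>x y. B x y = B y x"
    and add: "\<And>x x' y. B (x+x') y = B x y + B x' y"
    and scal: "\<And>a x y. B (a *\<^sub>R x) y = a * B x y"
    using assms unfolding weak_n_inner_product_def B_def by auto
  have nn: "\<And>x. n_norm ip x zs = sqrt (B x x)" by (simp add: n_norm_def B_def)
  have ex: "\<And>x y. B (x + y) (x + y) = B x x + 2 * B x y + B y y"
    using bil_expand[OF sym add scal, of _ 1] by simp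
  have wd: "n_norm ip x zs = n_norm ip u zs" if "coset zs x = coset zs u" for x u
  proof -
    have "u \<in> coset zs u" by (simp add: coset_def span_zero)
    then have "u \<in> coset zs x" using that by simp
    then have "u - x \<in> span (set zs)" by (simp add: coset_def)
    then have "B (u - x) (u - x) = 0" using zero span_lin_dep by blast
    then have "(B x (u - x))^2 \<le> 0" using cs[OF pos sym add scal, of x "u - x"] by simp
    then have "B x (u - x) = 0" by simp
    then have "B u u = B x x" using ex[of x "u - x"] \<open>B (u - x) (u - x) = 0\<close> by simp
    then show ?thesis by (simp add: nn)
  qed
  have qp: "quot_phi ip zs (coset zs x) = n_norm ip x zs" for x
    unfolding quot_phi_def
  proof (rule someI2[of _ "n_norm ip x zs"])
    show "\<exists>x'. coset zs x = coset zs x' \<and> n_norm ip x zs = n_norm ip x' zs" by blast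
  next
    fix r assume "\<exists>x'. coset zs x = coset zs x' \<and> r = n_norm ip x' zs"
    then obtain x' where h: "coset zs x = coset zs x'" "r = n_norm ip x' zs" by blast
    show "r = n_norm ip x zs" using wd[OF h(1)] h(2) by simp
  qed
  have hom: "quot_phi ip zs (coset zs (a *\<^sub>R x)) = \<bar>a\<bar> * quot_phi ip zs (coset zs x)" for a x
  proof -
    have "B (a *\<^sub>R x) (a *\<^sub>R x) = a^2 * B x x"
    proof -
      have "B (a *\<^sub>R x) (a *\<^sub>R x) = a * B x (a *\<^sub>R x)" by (rule scal)
      also have "B x (a *\<^sub>R x) = a * B x x" by (subst sym) (rule scal)
      finally show ?thesis by (simp add: power2_eq_square)
    qed
    then show ?thesis by (simp add: qp nn real_sqrt_mult)
  qed
  have tri: "quot_phi ip zs (coset zs (x + y)) \<le> quot_phi ip zs (coset zs x) + quot_phi ip zs (coset zs y)" for x y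
  proof -
    have "B x y \<le> sqrt ((B x y)^2)" by simp
    also have "\<dots> \<le> sqrt (B x x * B y y)" using cs[OF pos sym add scal, of x y] real_sqrt_le_mono by blast
    also have "\<dots> = sqrt (B x x) * sqrt (B y y)" by (simp add: real_sqrt_mult)
    finally have b: "B x y \<le> sqrt (B x x) * sqrt (B y y)" .
    have "B (x+y) (x+y) \<le> (sqrt (B x x) + sqrt (B y y))^2"
      using ex[of x y] b pos[of x] pos[of y] by (simp add: power2_eq_square algebra_simps)
    then have "sqrt (B (x+y) (x+y)) \<le> sqrt ((sqrt (B x x) + sqrt (B y y))^2)" using real_sqrt_le_mono by blast
    also have "\<dots> = sqrt (B x x) + sqrt (B y y)" 
    proof -
      have "0 \<le> sqrt (B x x) + sqrt (B y y)" using pos[of x] pos[of y] by simp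
      then show ?thesis by (simp only: real_sqrt_abs abs_of_nonneg)
    qed
    finally show ?thesis by (simp add: qp nn)
  qed
  have last: "coset zs x = coset zs 0" if "\<not> lin_dep_list zs" "quot_phi ip zs (coset zs x) = 0" for x
  proof -
    have "B x x = 0" using that(2) pos[of x] by (simp add: qp nn)
    then have "x \<in> span (set zs)" using zero indep_span that(1) by blast
    have "u - x \<in> span (set zs) \<longleftrightarrow> u - 0 \<in> span (set zs)" for u
    proof
      assume "u - x \<in> span (set zs)"
      from span_add[OF this \<open>x \<in> span (set zs)\<close>] show "u - 0 \<in> span (set zs)" by simp
    next
      assume "u - 0 \<in> span (set zs)"
      from span_diff[OF this \<open>x \<in> span (set zs)\<close>] show "u - x \<in> span (set zs)" by simp
    qed
    then show ?thesis unfolding coset_def by blast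
  qed
  show ?thesis
    apply (intro conjI allI impI)
         apply (erule wd)
        apply (rule qp)
       apply (simp only: qp nn real_sqrt_ge_zero pos)
      apply (rule hom)
     apply (rule tri)
    apply (erule (1) last)
    done
qed

end
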